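(* For any real numbers $t\ge1$ and $\varepsilon>0$, there exist an instance, a $t$-cohesive group $N^*$, and an allocation $A$ satisfying EJR-1 such that the average satisfaction of $N^*$ with respect to $A$ is at most $\frac{t-2+1/t}{2}+\varepsilon$.
   Context: Model: There is a set of agents $N=\{1,\dots,n\}$. The resource $R$ consists of a cake $C=[0,c]$ for a real $c\ge 0$ and a set of indivisible goods $G=\{g_1,\dots,g_m\}$ for an integer $m\ge 0$, with $\max(c,m)>0$. A piece of cake is a union of finitely many disjoint closed subintervals of $C$; its length $\ell(\cdot)$ is the sum of the lengths of its intervals. A bundle $R'=(C',G')$ consists of a piece of cake $C'\subseteq C$ and a set $G'\subseteq G$; its size is $s(R')=\ell(C')+|G'|$. Each agent $i$ approves a bundle $R_i=(C_i,G_i)$, and her utility for a bundle $R'$ is $u_i(R')=\ell(C_i\cap C')+|G_i\cap G'|$. A parameter $\alpha\in(0,c+m]$ is given; an allocation is a bundle $A$ with $s(A)\le\alpha$. For a real $t>0$, $N^*\subseteq N$ is $t$-cohesive if $|N^*|\ge t n/\alpha$ and $s(\bigcap_{i\in N^*}R_i)\ge t$. EJR-1: an allocation $A$ satisfies EJR-1 if for every real $t>0$ and every $t$-cohesive group $N^*$, some $j\in N^*$ has $u_j(A)>t-1$. The average satisfaction of a group $N'\subseteq N$ with respect to $A$ is $\frac1{|N'|}\sum_{i\in N'}u_i(A)$. *)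

theory Defs
  imports "HOL-Analysis.Analysis"
begin

(* Agents are N = {0..<n}; goods are G = {0..<m} (as naturals); the cake is [0,c].
   A bndl is a pair (piece of cake, set of goods). *)

type_synonym bndl = "real set \<times> nat set"

definition piece_of_cake :: "real \<Rightarrow> real set \<Rightarrow> bool" where
  "piece_of_cake c X \<longleftrightarrow> X \<subseteq> {0..c} \<and>
     (\<exists>I :: (real \<times> real) set. finite I \<and> (\<forall>(a,b)\<in>I. a \<le> b) \<and>
        pairwise (\<lambda>(a,b) (a',b'). {a..b} \<inter> {a'..b'} = {}) I \<and>
        X = (\<Union>(a,b)\<in>I. {a..b}))"

definition is_bundle :: "real \<Rightarrow> nat \<Rightarrow> bndl \<Rightarrow> bool" where
  "is_bundle c m B \<longleftrightarrow> piece_of_cake c (fst B) \<and> snd B \<subseteq> {0..<m}"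

(* length of a piece = Lebesgue measure (= sum of the lengths of its disjoint intervals) *)
definition len :: "real set \<Rightarrow> real" where
  "len X = measure lborel X"

definition bsize :: "bndl \<Rightarrow> real" where
  "bsize B = len (fst B) + real (card (snd B))"

definition utility :: "(nat \<Rightarrow> bndl) \<Rightarrow> nat \<Rightarrow> bndl \<Rightarrow> real" where
  "utility R i B = len (fst (R i) \<inter> fst B) + real (card (snd (R i) \<inter> snd B))"

definition valid_instance :: "nat \<Rightarrow> real \<Rightarrow> nat \<Rightarrow> (nat \<Rightarrow> bndl) \<Rightarrow> real \<Rightarrow> bool" where
  "valid_instance n c m R \<alpha> \<longleftrightarrow> n \<ge> 1 \<and> c \<ge> 0 \<and> max c (real m) > 0 \<and>
     (\<forall>i<n. is_bundle c m (R i)) \<and> 0 < \<alpha> \<and> \<alpha> \<le> c + real m"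

definition is_allocation :: "real \<Rightarrow> nat \<Rightarrow> real \<Rightarrow> bndl \<Rightarrow> bool" where
  "is_allocation c m \<alpha> A \<longleftrightarrow> is_bundle c m A \<and> bsize A \<le> \<alpha>"

definition common :: "(nat \<Rightarrow> bndl) \<Rightarrow> nat set \<Rightarrow> bndl" where
  "common R S = ((\<Inter>i\<in>S. fst (R i)), (\<Inter>i\<in>S. snd (R i)))"

definition cohesive :: "nat \<Rightarrow> (nat \<Rightarrow> bndl) \<Rightarrow> real \<Rightarrow> real \<Rightarrow> nat set \<Rightarrow> bool" where
  "cohesive n R \<alpha> t S \<longleftrightarrow> S \<subseteq> {0..<n} \<and> real (card S) \<ge> t * real n / \<alpha> \<and>
     bsize (common R S) \<ge> t"

definition EJR1 :: "nat \<Rightarrow> (nat \<Rightarrow> bndl) \<Rightarrow> real \<Rightarrow> bndl \<Rightarrow> bool" where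
  "EJR1 n R \<alpha> A \<longleftrightarrow> (\<forall>t>0. \<forall>S. cohesive n R \<alpha> t S \<longrightarrow> (\<exists>j\<in>S. utility R j A > t - 1))"

definition avg_sat :: "(nat \<Rightarrow> bndl) \<Rightarrow> nat set \<Rightarrow> bndl \<Rightarrow> real" where
  "avg_sat R S A = (\<Sum>i\<in>S. utility R i A) / real (card S)"

end

theory Submission
  imports Defs
begin

lemma sum_hinge:
  fixes p d :: nat
  shows "(\<Sum>i<p+d. max 0 (real i + 1 - real p)) = real d * (real d + 1) / 2"
proof (induction d)
  case 0
  have "(\<Sum>i<p. max 0 (real i + 1 - real p)) = (\<Sum>i<p. (0::real))"
    by (rule sum.cong) auto
  then show ?case by simp
next
  case (Suc d)
  have "(\<Sum>i<p+Suc d. max 0 (real i + 1 - real p)) =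
        (\<Sum>i<p+d. max 0 (real i + 1 - real p)) + max 0 (real (p+d) + 1 - real p)"
    by simp
  also have "\<dots> = real d * (real d + 1) / 2 + (real d + 1)" using Suc by simp
  finally show ?case by (simp add: field_simps)
qed

lemma final_ineq:
  fixes a t p e dl :: real
  assumes "t \<ge> 1" "a \<ge> t" "a < t + 1/p" "p > 0" "1/p \<le> e/2" "dl \<le> e/2"
  shows "dl + (a - 1) * (a - 1 + 1/p) / (2*a) \<le> (t - 2 + 1/t)/2 + e"
proof -
  have ta: "(t - 2 + 1/t)/2 = (t-1)^2/(2*t)" using assms(1) by (simp add: field_simps power2_eq_square)
  have a0: "a > 0" using assms by linarith
  have g: "(a-1)^2/(2*a) \<le> (t-1)^2/(2*t) + (a-t)/2"
  proof -
    have "(a-1)^2 * t \<le> ((t-1)^2 + t*(a-t)) * a"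
      using assms(2) by (simp add: algebra_simps power2_eq_square)
    then show ?thesis using a0 assms(1)
      by (simp add: field_simps)
  qed
  have h: "(a-1)*(1/p)/(2*a) \<le> 1/(2*p)"
  proof -
    have e1: "(a-1)*(1/p)/(2*a) = ((a-1)/a) * (1/(2*p))" by (simp add: field_simps)
    have "(a-1)/a \<le> 1" using a0 by (simp add: field_simps)
    then have "((a-1)/a) * (1/(2*p)) \<le> 1 * (1/(2*p))"
      using assms(4) by (intro mult_right_mono) auto
    then show ?thesis using e1 by linarith
  qed
  have eq: "(a - 1) * (a - 1 + 1/p) / (2*a) = (a-1)^2/(2*a) + (a-1)*(1/p)/(2*a)"
    using a0 assms(4) by (simp add: field_simps power2_eq_square)
  have "(a-t)/2 \<le> 1/(2*p)" using assms(3) by (simp add: field_simps)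
  then show ?thesis using g h eq ta assms(5,6) by linarith
qed

theorem mainTheorem17:
  fixes t \<epsilon> :: real
  assumes "t \<ge> 1" and "\<epsilon> > 0"
  shows "\<exists>n c m R \<alpha> S A. valid_instance n c m R \<alpha> \<and> cohesive n R \<alpha> t S \<and>
           is_allocation c m \<alpha> A \<and> EJR1 n R \<alpha> A \<and>
           avg_sat R S A \<le> (t - 2 + 1 / t) / 2 + \<epsilon>"
proof -
  define p :: nat where "p = nat \<lceil>2/\<epsilon>\<rceil> + 1"
  define k :: nat where "k = nat \<lceil>t * real p\<rceil>"
  define \<alpha> where "\<alpha> = real k / real p"
  define dl where "dl = min 1 (\<epsilon>/2)"
  define v where "v = (\<lambda>i::nat. max 0 ((real i + 1 - real p)/real p) + dl)"
  define R :: "nat \<Rightarrow> bndl" where "R = (\<lambda>i. ({0..\<alpha> + v i}, {}))"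
  define A :: bndl where "A = ({\<alpha>..\<alpha> + v (k-1)}, {})"
  define c where "c = 2*\<alpha> + 1"
  have p1: "real p \<ge> 1" unfolding p_def by simp
  have pe: "1/real p \<le> \<epsilon>/2"
  proof -
    have "real p \<ge> 2/\<epsilon>" unfolding p_def by linarith
    then show ?thesis using assms(2) p1 by (simp add: field_simps)
  qed
  have kge: "real k \<ge> t * real p" unfolding k_def by linarith
  have klt: "real k < t * real p + 1"
  proof -
    have "t * real p \<ge> 0" using assms(1) p1 by simp
    then have "real k = of_int \<lceil>t * real p\<rceil>" unfolding k_def by simp
    then show ?thesis by linarith
  qed
  have kp: "k \<ge> p"
  proof -
    have "t * real p \<ge> 1 * real p" using assms(1) p1 by (intro mult_right_mono) auto
    then have "real k \<ge> real p" using kge by linarith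
    then show ?thesis by simp
  qed
  have k1: "k \<ge> 1" using kp p_def by simp
  have dl0: "dl > 0" "dl \<le> 1" "dl \<le> \<epsilon>/2" unfolding dl_def using assms(2) by auto
  have \<alpha>t: "\<alpha> \<ge> t" unfolding \<alpha>_def using kge p1 by (simp add: field_simps)
  have \<alpha>lt: "\<alpha> < t + 1/real p" unfolding \<alpha>_def using klt p1 by (simp add: field_simps)
  have vpos: "\<And>i. v i \<ge> dl" unfolding v_def by simp
  have vmono: "\<And>i j. i \<le> j \<Longrightarrow> v i \<le> v j"
  proof -
    fix i j :: nat assume "i \<le> j"
    then have "(real i + 1 - real p)/real p \<le> (real j + 1 - real p)/real p"
      using p1 by (intro divide_right_mono) auto
    then show "v i \<le> v j" unfolding v_def by auto
  qed
  have vtop: "v (k-1) = \<alpha> - 1 + dl"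
    unfolding v_def \<alpha>_def using kp k1 p1 by (simp add: of_nat_diff field_simps)
  have vle: "\<And>i. i < k \<Longrightarrow> v i \<le> \<alpha>"
  proof -
    fix i assume "i < k"
    then have "v i \<le> v (k-1)" by (intro vmono) simp
    then show "v i \<le> \<alpha>" using vtop dl0 by simp
  qed
  have a0: "\<alpha> > 0" using \<alpha>t assms(1) by simp
  have util: "\<And>i. i < k \<Longrightarrow> utility R i A = v i"
  proof -
    fix i assume ik: "i < k"
    have "fst (R i) \<inter> fst A = {\<alpha>..\<alpha> + v i}"
      unfolding R_def A_def using vmono[of i "k-1"] ik a0 by auto
    then show "utility R i A = v i" unfolding utility_def len_def R_def A_def
      using vpos[of i] dl0 by simp
  qed
  have common: "common R {0..<k} = ({0..\<alpha> + v 0}, {})"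
  proof -
    have "(\<Inter>i\<in>{0..<k}. {0..\<alpha> + v i}) = {0..\<alpha> + v 0}"
    proof
      show "(\<Inter>i\<in>{0..<k}. {0..\<alpha> + v i}) \<subseteq> {0..\<alpha> + v 0}"
        using k1 by auto
      show "{0..\<alpha> + v 0} \<subseteq> (\<Inter>i\<in>{0..<k}. {0..\<alpha> + v i})"
      proof (intro subsetI INT_I)
        fix x i assume "x \<in> {0..\<alpha> + v 0}" "i \<in> {0..<k}"
        then show "x \<in> {0..\<alpha> + v i}" using vmono[of 0 i] by auto
      qed
    qed
    then show ?thesis unfolding common_def R_def using k1 by simp
  qed
  have vi: "valid_instance k c 0 R \<alpha>"
    unfolding valid_instance_def
  proof (intro conjI allI impI)
    show "1 \<le> k" by fact
    show "0 \<le> c" "0 < max c (real 0)" "0 < \<alpha>" "\<alpha> \<le> c + real 0"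
      unfolding c_def using a0 by auto
    fix i assume "i < k"
    then have "v i \<le> \<alpha>" by (rule vle)
    then show "is_bundle c 0 (R i)"
      unfolding is_bundle_def piece_of_cake_def R_def c_def using vpos[of i] dl0 a0
      by (auto intro!: exI[of _ "{(0, \<alpha> + v i)}"])
  qed
  have coh: "cohesive k R \<alpha> t {0..<k}"
    unfolding cohesive_def common bsize_def len_def
    using \<alpha>t a0 vpos[of 0] dl0 by (simp add: field_simps mult_right_mono)
  have alloc: "is_allocation c 0 \<alpha> A"
    unfolding is_allocation_def is_bundle_def piece_of_cake_def bsize_def len_def A_def c_def
    using vtop dl0 a0 \<alpha>t assms(1) by (auto intro!: exI[of _ "{(\<alpha>, \<alpha> + v (k-1))}"])
  have ejr: "EJR1 k R \<alpha> A"
    unfolding EJR1_def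
  proof (intro allI impI)
    fix t' :: real and S assume t'0: "t' > 0" and cS: "cohesive k R \<alpha> t' S"
    have Ssub: "S \<subseteq> {0..<k}" and cardS: "real (card S) \<ge> t' * real k / \<alpha>"
      using cS unfolding cohesive_def by auto
    have kal: "real k / \<alpha> = real p" unfolding \<alpha>_def using k1 p1 by simp
    have cardS': "real (card S) \<ge> t' * real p" using cardS kal by (metis times_divide_eq_right)
    have fin: "finite S" using Ssub finite_subset by blast
    have ne: "S \<noteq> {}"
    proof
      assume "S = {}"
      then have "t' * real p \<le> 0" using cardS' by simp
      moreover have "t' * real p > 0" using t'0 p1 by simp
      ultimately show False by simp
    qed
    define j where "j = Max S"
    have jS: "j \<in> S" unfolding j_def using fin ne by simp
    have "S \<subseteq> {0..<Suc j}" unfolding j_def using fin by (auto simp: less_Suc_eq_le)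
    then have "card S \<le> card {0..<Suc j}" by (intro card_mono) auto
    then have "card S \<le> Suc j" by simp
    then have "real (card S) \<le> real j + 1" by simp
    then have "t' \<le> (real j + 1) / real p" using cardS' p1 by (simp add: field_simps)
    moreover have "v j \<ge> (real j + 1 - real p)/real p + dl" unfolding v_def by simp
    moreover have "(real j + 1 - real p)/real p = (real j + 1)/real p - 1" using p1 by (simp add: field_simps)
    ultimately have "v j > t' - 1" using dl0 by linarith
    moreover have "j < k" using jS Ssub by auto
    ultimately have "utility R j A > t' - 1" using util by simp
    then show "\<exists>j\<in>S. utility R j A > t' - 1" using jS by blast
  qed
  have avg: "avg_sat R {0..<k} A \<le> (t - 2 + 1 / t) / 2 + \<epsilon>"
  proof -
    have hs: "(\<Sum>i<k. max 0 (real i + 1 - real p)) = real (k-p) * (real (k-p) + 1) / 2"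
      using sum_hinge[of p "k-p"] kp by simp
    have "(\<Sum>i\<in>{0..<k}. utility R i A) = (\<Sum>i<k. v i)"
      using util by (simp add: lessThan_atLeast0)
    also have "\<dots> = (\<Sum>i<k. max 0 (real i + 1 - real p) / real p + dl)"
      unfolding v_def using p1 by (intro sum.cong) (auto simp: max_divide_distrib_right)
    also have "\<dots> = (\<Sum>i<k. max 0 (real i + 1 - real p)) / real p + real k * dl"
      by (simp add: sum.distrib sum_divide_distrib)
    finally have s: "(\<Sum>i\<in>{0..<k}. utility R i A) = (\<Sum>i<k. max 0 (real i + 1 - real p)) / real p + real k * dl" .
    then have s: "(\<Sum>i\<in>{0..<k}. utility R i A) = real (k-p) * (real (k-p) + 1) / 2 / real p + real k * dl" using hs by simp
    define d where "d = real k - real p"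
    have kk: "real (k-p) = d" using kp unfolding d_def by simp
    have kpos: "real k > 0" using k1 by simp
    have am1: "\<alpha> - 1 = d / real p" unfolding \<alpha>_def d_def using p1 by (simp add: diff_divide_distrib)
    have am2: "\<alpha> - 1 + 1/real p = (d+1) / real p" using am1 by (simp add: add_divide_distrib)
    have h3: "d * (d+1) / (2 * real p * real k) = (\<alpha> - 1) * (\<alpha> - 1 + 1/real p) / (2*\<alpha>)"
      unfolding am1 am2 unfolding \<alpha>_def using kpos p1 by (simp add: field_simps)
    have "avg_sat R {0..<k} A = (d * (d + 1) / 2 / real p + real k * dl) / real k"
      unfolding avg_sat_def s kk by simp
    also have "\<dots> = dl + d * (d+1) / (2 * real p * real k)"
      using kpos p1 by (simp add: add_divide_distrib)
    finally have "avg_sat R {0..<k} A = dl + (\<alpha> - 1) * (\<alpha> - 1 + 1/real p) / (2*\<alpha>)" using h3 by simp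
    also have "\<dots> \<le> (t - 2 + 1 / t) / 2 + \<epsilon>"
      using final_ineq[OF assms(1) \<alpha>t \<alpha>lt _ pe dl0(3)] p1 by simp
    finally show ?thesis .
  qed
  show ?thesis using vi coh alloc ejr avg by blast
qed

end
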